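(* For each positive integer $n\ge 4$, there exists a family of $n$ digraphs of order $4^n$, each strongly connected and non symmetric, which are pairwise real strongly quasi-cospectral.
   Context: A sidigraph is a digraph (no loops, at most one arc from $u$ to $v$) with a sign $\pm1$ on each arc; its adjacency matrix has entry $\sigma(v_i,v_j)$ if there is an arc from $v_i$ to $v_j$ and $0$ otherwise, and its spectrum is the multiset of eigenvalues of this matrix. An (unsigned) digraph is identified with the sidigraph having all arcs positive. A sidigraph on a digraph $D$ is a sidigraph whose underlying digraph is $D$. Two (si)digraphs are cospectral if they have the same spectrum. The sign of a cycle is the product of its arc signs; a sidigraph is cycle balanced if every directed cycle is positive. A digraph is symmetric if whenever $(u,v)$ is an arc so is $(v,u)$; it is strongly connected in the usual sense. Two digraphs $D_1,D_2$ are real strongly quasi-cospectral if $D_1$ and $D_2$ are cospectral with all eigenvalues real, and there exist non cycle balanced sidigraphs $S_1$ on $D_1$ and $S_2$ on $D_2$ that are cospectral with all eigenvalues real. *)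

theory Defs
  imports Complex_Main "Jordan_Normal_Form.Char_Poly" "HOL-Computational_Algebra.Polynomial"
begin

text \<open>Digraphs on the vertex set {0..<N}: a set of arcs A with no loops
  (at most one arc from u to v is automatic for a set of pairs).\<close>
definition digraph :: "nat \<Rightarrow> (nat \<times> nat) set \<Rightarrow> bool" where
  "digraph N A \<longleftrightarrow> A \<subseteq> {0..<N} \<times> {0..<N} \<and> (\<forall>v. (v, v) \<notin> A)"

definition signing :: "(nat \<times> nat) set \<Rightarrow> (nat \<times> nat \<Rightarrow> int) \<Rightarrow> bool" where
  "signing A \<sigma> \<longleftrightarrow> (\<forall>a\<in>A. \<sigma> a = 1 \<or> \<sigma> a = -1)"

definition adj_mat :: "nat \<Rightarrow> (nat \<times> nat) set \<Rightarrow> (nat \<times> nat \<Rightarrow> int) \<Rightarrow> complex mat" where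
  "adj_mat N A \<sigma> = mat N N (\<lambda>(i, j). if (i, j) \<in> A then of_int (\<sigma> (i, j)) else 0)"

definition spec :: "complex mat \<Rightarrow> complex multiset" where
  "spec M = proots (char_poly M)"

definition real_spectrum :: "complex mat \<Rightarrow> bool" where
  "real_spectrum M \<longleftrightarrow> (\<forall>x\<in>#spec M. x \<in> \<real>)"

text \<open>Unsigned digraph = sidigraph with all arcs positive.\<close>
definition pos_sign :: "nat \<times> nat \<Rightarrow> int" where
  "pos_sign a = 1"

definition dcycle :: "(nat \<times> nat) set \<Rightarrow> nat list \<Rightarrow> bool" where
  "dcycle A vs \<longleftrightarrow> vs \<noteq> [] \<and> distinct vs \<and>
     (\<forall>i<length vs. (vs ! i, vs ! ((i + 1) mod length vs)) \<in> A)"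

definition cycle_sign :: "(nat \<times> nat \<Rightarrow> int) \<Rightarrow> nat list \<Rightarrow> int" where
  "cycle_sign \<sigma> vs = (\<Prod>i<length vs. \<sigma> (vs ! i, vs ! ((i + 1) mod length vs)))"

definition cycle_balanced :: "(nat \<times> nat) set \<Rightarrow> (nat \<times> nat \<Rightarrow> int) \<Rightarrow> bool" where
  "cycle_balanced A \<sigma> \<longleftrightarrow> (\<forall>vs. dcycle A vs \<longrightarrow> cycle_sign \<sigma> vs = 1)"

definition symmetric_digraph :: "(nat \<times> nat) set \<Rightarrow> bool" where
  "symmetric_digraph A \<longleftrightarrow> (\<forall>u v. (u, v) \<in> A \<longrightarrow> (v, u) \<in> A)"

definition strongly_connected :: "nat \<Rightarrow> (nat \<times> nat) set \<Rightarrow> bool" where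
  "strongly_connected N A \<longleftrightarrow> (\<forall>u\<in>{0..<N}. \<forall>v\<in>{0..<N}. (u, v) \<in> A\<^sup>*)"

definition isomorphic :: "nat \<Rightarrow> (nat \<times> nat) set \<Rightarrow> (nat \<times> nat) set \<Rightarrow> bool" where
  "isomorphic N A B \<longleftrightarrow> (\<exists>f. bij_betw f {0..<N} {0..<N} \<and>
     (\<forall>u\<in>{0..<N}. \<forall>v\<in>{0..<N}. (u, v) \<in> A \<longleftrightarrow> (f u, f v) \<in> B))"

definition real_cospectral :: "nat \<Rightarrow> (nat \<times> nat) set \<Rightarrow> (nat \<times> nat \<Rightarrow> int)
    \<Rightarrow> (nat \<times> nat) set \<Rightarrow> (nat \<times> nat \<Rightarrow> int) \<Rightarrow> bool" where
  "real_cospectral N A1 \<sigma>1 A2 \<sigma>2 \<longleftrightarrow>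
     spec (adj_mat N A1 \<sigma>1) = spec (adj_mat N A2 \<sigma>2) \<and>
     real_spectrum (adj_mat N A1 \<sigma>1) \<and> real_spectrum (adj_mat N A2 \<sigma>2)"

definition real_strongly_quasi_cospectral ::
    "nat \<Rightarrow> (nat \<times> nat) set \<Rightarrow> (nat \<times> nat) set \<Rightarrow> bool" where
  "real_strongly_quasi_cospectral N D1 D2 \<longleftrightarrow>
     real_cospectral N D1 pos_sign D2 pos_sign \<and>
     (\<exists>\<sigma>1 \<sigma>2. signing D1 \<sigma>1 \<and> signing D2 \<sigma>2 \<and>
        \<not> cycle_balanced D1 \<sigma>1 \<and> \<not> cycle_balanced D2 \<sigma>2 \<and>
        real_cospectral N D1 \<sigma>1 D2 \<sigma>2)"

end

theory Submission
  imports Defs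
begin

lemma ST:
  fixes M :: "complex mat"
  assumes M: "M \<in> carrier_mat m m" and MM: "M * M = 0\<^sub>m m m"
  shows "(x \<cdot>\<^sub>m 1\<^sub>m m - M) * (x \<cdot>\<^sub>m 1\<^sub>m m + M) = (x*x) \<cdot>\<^sub>m 1\<^sub>m m"
proof -
  have S: "x \<cdot>\<^sub>m 1\<^sub>m m - M \<in> carrier_mat m m" using M by auto
  have "(x \<cdot>\<^sub>m 1\<^sub>m m - M) * (x \<cdot>\<^sub>m 1\<^sub>m m + M) = (x \<cdot>\<^sub>m 1\<^sub>m m - M) * (x \<cdot>\<^sub>m 1\<^sub>m m) + (x \<cdot>\<^sub>m 1\<^sub>m m - M) * M"
    using M by (intro mult_add_distrib_mat) auto
  also have "(x \<cdot>\<^sub>m 1\<^sub>m m - M) * (x \<cdot>\<^sub>m 1\<^sub>m m) = x \<cdot>\<^sub>m (x \<cdot>\<^sub>m 1\<^sub>m m - M)"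
    using mult_smult_distrib[OF S one_carrier_mat, of x] right_mult_one_mat[OF S] by simp
  also have "(x \<cdot>\<^sub>m 1\<^sub>m m - M) * M = (x \<cdot>\<^sub>m 1\<^sub>m m) * M - M * M"
    using M by (intro minus_mult_distrib_mat) auto
  also have "(x \<cdot>\<^sub>m 1\<^sub>m m) * M = x \<cdot>\<^sub>m M"
    using mult_smult_assoc_mat[OF one_carrier_mat M, of x] M by simp
  finally show ?thesis using M MM by (intro eq_matI) (auto simp: algebra_simps)
qed

lemma det_key:
  fixes R C M :: "complex mat" and x :: complex
  assumes R: "R \<in> carrier_mat 1 m" and C: "C \<in> carrier_mat m 1" and M: "M \<in> carrier_mat m m"
  and MM: "M * M = 0\<^sub>m m m" and ut: "upper_triangular M" and dg: "\<forall>i<m. M $$ (i,i) = 0"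
  and x: "x \<noteq> 0"
  shows "det (four_block_mat (mat 1 1 (\<lambda>_. x)) (-R) (-C) (x \<cdot>\<^sub>m 1\<^sub>m m - M)) * x^2
     = x^m * (x^3 - x * (R*C)$$(0,0) - (R*(M*C))$$(0,0))"
proof -
  define S where "S = x \<cdot>\<^sub>m 1\<^sub>m m - M"
  define T where "T = x \<cdot>\<^sub>m 1\<^sub>m m + M"
  define X1 where "X1 = (mat 1 1 (\<lambda>_. x) :: complex mat)"
  define Y1 where "Y1 = (mat 1 1 (\<lambda>_. x*x) :: complex mat)"
  define X where "X = four_block_mat X1 (-R) (-C) S"
  define Y where "Y = four_block_mat Y1 (0\<^sub>m 1 m) (T * C) ((x*x) \<cdot>\<^sub>m 1\<^sub>m m)"
  have S: "S \<in> carrier_mat m m" and T: "T \<in> carrier_mat m m" using M by (auto simp: S_def T_def)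
  have X1: "X1 \<in> carrier_mat 1 1" and Y1: "Y1 \<in> carrier_mat 1 1" by (auto simp: X1_def Y1_def)
  have TC: "T * C \<in> carrier_mat m 1" using T C by auto
  have X: "X \<in> carrier_mat (1+m) (1+m)" unfolding X_def using X1 R C S by auto
  have Y: "Y \<in> carrier_mat (1+m) (1+m)" unfolding Y_def using Y1 TC by auto
  have XY: "X * Y = four_block_mat (X1 * Y1 + (-R) * (T * C)) (X1 * 0\<^sub>m 1 m + (-R) * ((x*x) \<cdot>\<^sub>m 1\<^sub>m m))
     ((-C) * Y1 + S * (T * C)) ((-C) * 0\<^sub>m 1 m + S * ((x*x) \<cdot>\<^sub>m 1\<^sub>m m))"
    unfolding X_def Y_def
    by (rule mult_four_block_mat, insert X1 Y1 R C S TC, auto)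
  have STC: "S * (T * C) = (x*x) \<cdot>\<^sub>m C"
  proof -
    have "S * (T * C) = (S * T) * C" using S T C by simp
    also have "S * T = (x*x) \<cdot>\<^sub>m 1\<^sub>m m" unfolding S_def T_def by (rule ST[OF M MM])
    finally show ?thesis using C mult_smult_assoc_mat[OF one_carrier_mat C, of "x*x"] by simp
  qed
  have LL: "(-C) * Y1 + S * (T * C) = 0\<^sub>m m 1"
    unfolding STC using C by (intro eq_matI) (auto simp: Y1_def scalar_prod_def)
  have LR: "(-C) * 0\<^sub>m 1 m + S * ((x*x) \<cdot>\<^sub>m 1\<^sub>m m) = (x*x) \<cdot>\<^sub>m S"
    using mult_smult_distrib[OF S one_carrier_mat, of "x*x"] right_mult_one_mat[OF S] C S
    by (intro eq_matI) (auto simp: scalar_prod_def)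
  have TC2: "T * C = x \<cdot>\<^sub>m C + M * C"
    unfolding T_def using add_mult_distrib_mat[of "x \<cdot>\<^sub>m 1\<^sub>m m" m m M C 1] M C
      mult_smult_assoc_mat[OF one_carrier_mat C, of x] by simp
  have RTC: "(R * (T * C)) $$ (0,0) = x * (R*C)$$(0,0) + (R*(M*C))$$(0,0)"
  proof -
    have "R * (T * C) = R * (x \<cdot>\<^sub>m C) + R * (M * C)" unfolding TC2
      by (rule mult_add_distrib_mat, insert R C M, auto)
    also have "R * (x \<cdot>\<^sub>m C) = x \<cdot>\<^sub>m (R * C)" by (rule mult_smult_distrib[OF R C])
    finally show ?thesis using R C M by simp
  qed
  have TL: "X1 * Y1 + (-R) * (T * C) \<in> carrier_mat 1 1" using X1 Y1 R TC by auto
  have TLv: "(X1 * Y1 + (-R) * (T * C)) $$ (0,0) = x^3 - x * (R*C)$$(0,0) - (R*(M*C))$$(0,0)"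
  proof -
    have "((-R) * (T * C)) $$ (0,0) = - ((R * (T * C)) $$ (0,0))"
      using R TC by (subst uminus_mult_left_mat) auto
    moreover have "(X1 * Y1) $$ (0,0) = x^3" by (simp add: X1_def Y1_def scalar_prod_def power3_eq_cube)
    moreover have "(X1 * Y1 + (-R) * (T * C)) $$ (0,0) = (X1 * Y1) $$ (0,0) + ((-R) * (T * C)) $$ (0,0)"
      using R TC X1 Y1 by (subst index_add_mat) auto
    ultimately show ?thesis using RTC by simp
  qed
  have detS: "det S = x^m"
  proof -
    have "upper_triangular S" using ut M unfolding S_def upper_triangular_def by auto
    then have "det S = prod_list (diag_mat S)" using det_upper_triangular S by blast
    also have "diag_mat S = replicate m x" using S dg M
      by (intro nth_equalityI) (auto simp: diag_mat_def S_def)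
    finally show ?thesis by simp
  qed
  have dY1: "det Y1 = x * x" by (simp add: det_single[OF Y1]) (simp add: Y1_def)
  have dXY: "det (X * Y) = (x^3 - x * (R*C)$$(0,0) - (R*(M*C))$$(0,0)) * ((x*x)^m * x^m)"
    unfolding XY LL LR
    by (subst det_four_block_mat_lower_left_zero_col[OF TL], insert R S, auto simp: det_single[OF TL] TLv detS)
  have dY: "det Y = x * x * (x*x)^m"
    unfolding Y_def by (subst det_four_block_mat_upper_right_zero[OF Y1 refl TC], auto simp: dY1)
  have "det (X * Y) = det X * det Y" by (rule det_mult[OF X Y])
  with dXY dY have "det X * (x*x) * (x*x)^m = (x^3 - x * (R*C)$$(0,0) - (R*(M*C))$$(0,0)) * x^m * (x*x)^m"
    by (simp add: algebra_simps)
  then have "det X * (x*x) = (x^3 - x * (R*C)$$(0,0) - (R*(M*C))$$(0,0)) * x^m" using x by simp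
  then show ?thesis unfolding X_def X1_def S_def by (simp add: power2_eq_square algebra_simps)
qed

lemma poly_eq_nonzero:
  fixes p q :: "complex poly"
  assumes "\<And>x. x \<noteq> 0 \<Longrightarrow> poly p x = poly q x"
  shows "p = q"
proof -
  have "UNIV - {0} \<subseteq> {x. poly (p - q) x = 0}" using assms by auto
  moreover have "infinite (UNIV - {0::complex})" by (simp add: infinite_UNIV_char_0)
  ultimately have "infinite {x. poly (p - q) x = 0}" using finite_subset by blast
  then have "p - q = 0" using poly_roots_finite by blast
  then show ?thesis by simp
qed

lemma char_poly_key:
  fixes A :: "complex mat"
  assumes A: "A \<in> carrier_mat (Suc m) (Suc m)" and A00: "A $$ (0,0) = 0"
  and nil: "\<And>i j k. i < m \<Longrightarrow> j < m \<Longrightarrow> k < m \<Longrightarrow> A $$ (Suc i, Suc j) \<noteq> 0 \<Longrightarrow> A $$ (Suc j, Suc k) = 0"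
  and ut: "\<And>i j. i < m \<Longrightarrow> j \<le> i \<Longrightarrow> A $$ (Suc i, Suc j) = 0"
  and m2: "m \<ge> 2"
  shows "char_poly A = monom 1 (m-2) * [: - (\<Sum>j<m. \<Sum>k<m. A $$ (0, Suc j) * A $$ (Suc j, Suc k) * A $$ (Suc k, 0)),
             - (\<Sum>j<m. A $$ (0, Suc j) * A $$ (Suc j, 0)), 0, 1 :]"
    (is "_ = monom 1 (m-2) * [: - ?b, - ?a, 0, 1:]")
proof (rule poly_eq_nonzero)
  fix x :: complex assume x: "x \<noteq> 0"
  define R where "R = mat 1 m (\<lambda>(i,j). A $$ (0, Suc j))"
  define C where "C = mat m 1 (\<lambda>(i,j). A $$ (Suc i, 0))"
  define M where "M = mat m m (\<lambda>(i,j). A $$ (Suc i, Suc j))"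
  have R: "R \<in> carrier_mat 1 m" and C: "C \<in> carrier_mat m 1" and M: "M \<in> carrier_mat m m"
    by (auto simp: R_def C_def M_def)
  have MM: "M * M = 0\<^sub>m m m"
  proof (rule eq_matI)
    fix i j assume ij: "i < dim_row (0\<^sub>m m m)" "j < dim_col (0\<^sub>m m m)"
    have "(\<Sum>k<m. A $$ (Suc i, Suc k) * A $$ (Suc k, Suc j)) = 0"
    proof (intro sum.neutral ballI)
      fix k assume k: "k \<in> {..<m}"
      show "A $$ (Suc i, Suc k) * A $$ (Suc k, Suc j) = 0"
      proof (cases "A $$ (Suc i, Suc k) = 0")
        case False
        then have "A $$ (Suc k, Suc j) = 0" using nil[of i k j] ij k by auto
        then show ?thesis by simp
      qed simp
    qed
    then show "(M * M) $$ (i, j) = 0\<^sub>m m m $$ (i, j)"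
      using ij by (simp add: M_def scalar_prod_def atLeast0LessThan)
  qed (auto simp: M_def)
  have utM: "upper_triangular M" using ut unfolding upper_triangular_def M_def by auto
  have dg: "\<forall>i<m. M $$ (i,i) = 0" using ut unfolding M_def by auto
  have eq: "- (char_matrix A x) = four_block_mat (mat 1 1 (\<lambda>_. x)) (-R) (-C) (x \<cdot>\<^sub>m 1\<^sub>m m - M)"
  proof (rule eq_matI)
    fix i j assume ij: "i < dim_row (four_block_mat (mat 1 1 (\<lambda>_. x)) (-R) (-C) (x \<cdot>\<^sub>m 1\<^sub>m m - M))"
      "j < dim_col (four_block_mat (mat 1 1 (\<lambda>_. x)) (-R) (-C) (x \<cdot>\<^sub>m 1\<^sub>m m - M))"
    then have i: "i < Suc m" and j: "j < Suc m" using R C M by auto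
    show "(- (char_matrix A x)) $$ (i,j) = four_block_mat (mat 1 1 (\<lambda>_. x)) (-R) (-C) (x \<cdot>\<^sub>m 1\<^sub>m m - M) $$ (i,j)"
    proof (cases i)
      case 0
      then show ?thesis using i j A A00 R C M by (cases j) (auto simp: char_matrix_def R_def)
    next
      case (Suc i')
      then show ?thesis using i j A A00 R C M by (cases j) (auto simp: char_matrix_def C_def M_def)
    qed
  qed (use A R C M in \<open>auto simp: char_matrix_def\<close>)
  have a: "(R*C)$$(0,0) = ?a" using R C by (simp add: R_def C_def scalar_prod_def atLeast0LessThan)
  have b: "(R*(M*C))$$(0,0) = ?b" using R C M
    by (simp add: R_def C_def M_def scalar_prod_def atLeast0LessThan sum_distrib_left mult.assoc)
  have "poly (char_poly A) x = det (- (char_matrix A x))" by (rule char_poly_matrix[OF A])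
  also have "\<dots> * x^2 = x^m * (x^3 - x * ?a - ?b)" unfolding eq a[symmetric] b[symmetric]
    by (rule det_key[OF R C M MM utM dg x])
  finally have "poly (char_poly A) x * x^2 = x^m * (x^3 - x * ?a - ?b)" .
  moreover have "x^m = x^(m-2) * x^2" using m2 by (metis le_add_diff_inverse2 power_add)
  ultimately have "poly (char_poly A) x * x^2 = x^(m-2) * (x^3 - x * ?a - ?b) * x^2" by simp
  then have "poly (char_poly A) x = x^(m-2) * (x^3 - x * ?a - ?b)" using x by simp
  then show "poly (char_poly A) x = poly (monom 1 (m-2) * [: - ?b, - ?a, 0, 1:]) x"
    by (simp add: poly_monom algebra_simps power3_eq_cube)
qed

lemma cubic_real_root:
  fixes z :: complex and a b :: real
  assumes z: "z^3 - of_real a * z - of_real b = 0" and disc: "27 * b^2 \<le> 4 * a^3"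
  shows "z \<in> \<real>"
proof (rule ccontr)
  assume nr: "z \<notin> \<real>"
  obtain u v where zuv: "z = Complex u v" by (cases z)
  have v: "v \<noteq> 0" using nr zuv by (auto simp: complex_is_Real_iff)
  have re: "u^3 - 3*u*v^2 - a*u - b = 0" and im: "3*u^2*v - v^3 - a*v = 0"
    using z unfolding zuv complex_eq_iff by (simp_all add: power3_eq_cube power2_eq_square algebra_simps)
  have im2: "3*u^2 - v^2 - a = 0"
  proof -
    have "v * (3*u^2 - v^2 - a) = 0" using im by (simp add: algebra_simps power2_eq_square power3_eq_cube)
    then show ?thesis using v by simp
  qed
  define w where "w = u^2"
  have w0: "w \<ge> 0" unfolding w_def by simp
  have vv: "v^2 > 0" using v by simp
  have wa: "3*w > a" using im2 vv unfolding w_def by linarith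
  have vsq: "v^2 = 3*u^2 - a" using im2 by simp
  have "b = u^3 - 3*u*v^2 - a*u" using re by simp
  also have "\<dots> = u^3 - 3*u*(3*u^2 - a) - a*u" using vsq by simp
  also have "\<dots> = -8*u^3 + 2*a*u" by (simp add: algebra_simps power2_eq_square power3_eq_cube)
  finally have bb: "b = -8*u^3 + 2*a*u" .
  have b2: "b^2 = w * (8*w - 2*a)^2" unfolding bb w_def by (simp add: power2_eq_square power3_eq_cube algebra_simps)
  have f: "27 * (w * (8*w - 2*a)^2) - 4*a^3 = 4 * ((3*w - a) * (12*w - a)^2)"
    by (simp add: power2_eq_square power3_eq_cube algebra_simps)
  have "12*w \<noteq> a" using wa w0 by linarith
  then have "(12*w - a)^2 > 0" by simp
  moreover have "3*w - a > 0" using wa by simp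
  ultimately have "27 * (w * (8*w - 2*a)^2) - 4*a^3 > 0" unfolding f by simp
  then show False using disc b2 by simp
qed

definition arcsG :: "nat \<Rightarrow> nat \<Rightarrow> nat \<Rightarrow> (nat \<times> nat) set" where
  "arcsG N L p = {(u,v). (u = 0 \<and> ((1 \<le> v \<and> v \<le> p) \<or> (L < v \<and> v < N))) \<or> (v = 0 \<and> p < u \<and> u < N)
     \<or> (u = 1 \<and> p < v \<and> v \<le> L) \<or> (2 \<le> u \<and> u \<le> p \<and> v = Suc p)}"

definition sg :: "int \<Rightarrow> nat \<times> nat \<Rightarrow> int" where
  "sg s a = (if fst a \<noteq> 0 \<and> snd a \<noteq> 0 then s else 1)"

lemma sum_count: fixes m :: nat shows "(\<Sum>j<m. if P j then (c::complex) else 0) = of_nat (card {j. j < m \<and> P j}) * c"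
proof -
  have fin: "finite {..<m}" by simp
  show ?thesis using sum.inter_filter[OF fin, of "\<lambda>_. c" P] by simp
qed

lemma a_sum:
  assumes p1: "1 \<le> p" and pL: "p < L" and LN: "L < Suc m"
  shows "(\<Sum>j<m. adj_mat (Suc m) (arcsG (Suc m) L p) (sg s) $$ (0, Suc j) * adj_mat (Suc m) (arcsG (Suc m) L p) (sg s) $$ (Suc j, 0))
     = of_nat (m - L)"
proof -
  have "(\<Sum>j<m. adj_mat (Suc m) (arcsG (Suc m) L p) (sg s) $$ (0, Suc j) * adj_mat (Suc m) (arcsG (Suc m) L p) (sg s) $$ (Suc j, 0))
     = (\<Sum>j<m. if L \<le> j then 1 else 0)"
    using pL by (intro sum.cong refl) (auto simp: adj_mat_def arcsG_def sg_def)
  also have "\<dots> = of_nat (card {j. j < m \<and> L \<le> j})" by (simp add: sum_count)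
  also have "{j. j < m \<and> L \<le> j} = {L..<m}" by auto
  finally show ?thesis by simp
qed

lemma inner_sum:
  assumes p1: "1 \<le> p" and pL: "p < L" and LN: "L < Suc m" and j: "j < m"
  shows "(\<Sum>k<m. adj_mat (Suc m) (arcsG (Suc m) L p) (sg s) $$ (Suc j, Suc k) * adj_mat (Suc m) (arcsG (Suc m) L p) (sg s) $$ (Suc k, 0))
     = of_int s * (if j = 0 then of_nat (L - p) else if j < p then 1 else 0)"
proof -
  have "(\<Sum>k<m. adj_mat (Suc m) (arcsG (Suc m) L p) (sg s) $$ (Suc j, Suc k) * adj_mat (Suc m) (arcsG (Suc m) L p) (sg s) $$ (Suc k, 0))
     = (\<Sum>k<m. if (j = 0 \<and> p \<le> k \<and> k < L) \<or> (1 \<le> j \<and> j < p \<and> k = p) then of_int s else 0)"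
    using pL j p1 by (intro sum.cong refl) (auto simp: adj_mat_def arcsG_def sg_def)
  also have "\<dots> = of_nat (card {k. k < m \<and> ((j = 0 \<and> p \<le> k \<and> k < L) \<or> (1 \<le> j \<and> j < p \<and> k = p))}) * of_int s"
    by (rule sum_count)
  also have "card {k. k < m \<and> ((j = 0 \<and> p \<le> k \<and> k < L) \<or> (1 \<le> j \<and> j < p \<and> k = p))}
      = (if j = 0 then L - p else if j < p then 1 else 0)"
  proof -
    have "j = 0 \<Longrightarrow> {k. k < m \<and> ((j = 0 \<and> p \<le> k \<and> k < L) \<or> (1 \<le> j \<and> j < p \<and> k = p))} = {p..<L}"
      using LN by auto
    moreover have "j \<noteq> 0 \<Longrightarrow> j < p \<Longrightarrow> {k. k < m \<and> ((j = 0 \<and> p \<le> k \<and> k < L) \<or> (1 \<le> j \<and> j < p \<and> k = p))} = {p}"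
      using LN pL by auto
    moreover have "j \<noteq> 0 \<Longrightarrow> \<not> j < p \<Longrightarrow> {k. k < m \<and> ((j = 0 \<and> p \<le> k \<and> k < L) \<or> (1 \<le> j \<and> j < p \<and> k = p))} = {}"
      by auto
    ultimately show ?thesis by auto
  qed
  finally show ?thesis by simp
qed

lemma card0: "0 < m \<Longrightarrow> card {j. j = (0::nat) \<and> j < m} = 1"
proof -
  assume "0 < m" then have "{j. j = (0::nat) \<and> j < m} = {0}" by auto
  then show ?thesis by simp
qed

lemma b_sum:
  assumes p1: "1 \<le> p" and pL: "p < L" and LN: "L < Suc m"
  shows "(\<Sum>j<m. \<Sum>k<m. adj_mat (Suc m) (arcsG (Suc m) L p) (sg s) $$ (0, Suc j) * adj_mat (Suc m) (arcsG (Suc m) L p) (sg s) $$ (Suc j, Suc k) * adj_mat (Suc m) (arcsG (Suc m) L p) (sg s) $$ (Suc k, 0))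
     = of_int s * of_nat (L - 1)"
proof -
  let ?A = "adj_mat (Suc m) (arcsG (Suc m) L p) (sg s)"
  have "(\<Sum>j<m. \<Sum>k<m. ?A $$ (0, Suc j) * ?A $$ (Suc j, Suc k) * ?A $$ (Suc k, 0))
      = (\<Sum>j<m. ?A $$ (0, Suc j) * (\<Sum>k<m. ?A $$ (Suc j, Suc k) * ?A $$ (Suc k, 0)))"
    by (simp add: sum_distrib_left mult.assoc)
  also have "\<dots> = (\<Sum>j<m. of_int s * ((if j = 0 then of_nat (L - p) else 0) + (if 1 \<le> j \<and> j < p then 1 else 0)))"
  proof (intro sum.cong refl)
    fix j assume j: "j \<in> {..<m}"
    have inn: "(\<Sum>k<m. ?A $$ (Suc j, Suc k) * ?A $$ (Suc k, 0)) = of_int s * (if j = 0 then of_nat (L - p) else if j < p then 1 else 0)"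
      by (rule inner_sum[OF p1 pL LN]) (use j in auto)
    show "?A $$ (0, Suc j) * (\<Sum>k<m. ?A $$ (Suc j, Suc k) * ?A $$ (Suc k, 0))
       = of_int s * ((if j = 0 then of_nat (L - p) else 0) + (if 1 \<le> j \<and> j < p then 1 else 0))"
      unfolding inn using j p1 pL by (auto simp: adj_mat_def arcsG_def sg_def)
  qed
  also have "\<dots> = of_int s * (of_nat (L - p) + of_nat (card {j. j < m \<and> 1 \<le> j \<and> j < p}))"
    using pL LN by (simp add: sum_distrib_left[symmetric] sum.distrib sum_count card0[of m])
  also have "{j. j < m \<and> 1 \<le> j \<and> j < p} = {1..<p}" using pL LN by auto
  finally show ?thesis using p1 pL by simp
qed

lemma char_poly_G:
  assumes p1: "1 \<le> p" and pL: "p < L" and LN: "L < Suc m" and m2: "m \<ge> 2"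
  shows "char_poly (adj_mat (Suc m) (arcsG (Suc m) L p) (sg s))
     = monom 1 (m-2) * [: - (of_int s * of_nat (L - 1)), - of_nat (m - L), 0, 1 :]"
proof -
  let ?A = "adj_mat (Suc m) (arcsG (Suc m) L p) (sg s)"
  have A: "?A \<in> carrier_mat (Suc m) (Suc m)" by (simp add: adj_mat_def)
  have A00: "?A $$ (0,0) = 0" by (simp add: adj_mat_def arcsG_def)
  have nil: "?A $$ (Suc j, Suc k) = 0" if "i < m" "j < m" "k < m" "?A $$ (Suc i, Suc j) \<noteq> 0" for i j k
    using that p1 by (auto simp: adj_mat_def arcsG_def split: if_splits)
  have ut: "?A $$ (Suc i, Suc j) = 0" if "i < m" "j \<le> i" for i j
    using that p1 by (auto simp: adj_mat_def arcsG_def)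
  show ?thesis
    using char_poly_key[OF A A00 nil ut m2] unfolding a_sum[OF p1 pL LN] b_sum[OF p1 pL LN] .
qed

lemma spec_G:
  assumes p1: "1 \<le> p" and pL: "p < L" and LN: "L < Suc m" and m2: "m \<ge> 2"
  shows "spec (adj_mat (Suc m) (arcsG (Suc m) L p) (sg s))
     = proots (monom 1 (m-2) * [: - (of_int s * of_nat (L - 1)), - of_nat (m - L), 0, 1 :])"
  unfolding spec_def char_poly_G[OF assms] ..

lemma real_G:
  assumes p1: "1 \<le> p" and pL: "p < L" and LN: "L < Suc m" and m2: "m \<ge> 2"
  and s: "s = 1 \<or> s = -1" and disc: "27 * (real (L - 1))^2 \<le> 4 * (real (m - L))^3"
  shows "real_spectrum (adj_mat (Suc m) (arcsG (Suc m) L p) (sg s))"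
  unfolding real_spectrum_def
proof
  fix z assume "z \<in># spec (adj_mat (Suc m) (arcsG (Suc m) L p) (sg s))"
  then have z: "z \<in># proots (monom 1 (m-2) * [: - (of_int s * of_nat (L - 1)), - of_nat (m - L), 0, 1 :])"
    unfolding spec_G[OF p1 pL LN m2] .
  let ?P = "monom (1::complex) (m-2) * [: - (of_int s * of_nat (L - 1)), - of_nat (m - L), 0, 1 :]"
  have "?P \<noteq> 0" using z by auto
  then have "poly ?P z = 0" using z set_count_proots by blast
  then have "z^(m-2) * (z^3 - of_nat (m - L) * z - of_int s * of_nat (L - 1)) = 0"
    by (simp add: poly_monom algebra_simps power3_eq_cube)
  then have "z = 0 \<or> z^3 - of_nat (m - L) * z - of_int s * of_nat (L - 1) = 0" by auto
  then show "z \<in> \<real>"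
  proof
    assume c: "z^3 - of_nat (m - L) * z - of_int s * of_nat (L - 1) = 0"
    have c': "z^3 - of_real (real (m - L)) * z - of_real (real_of_int s * real (L - 1)) = 0"
      using c by simp
    show "z \<in> \<real>"
    proof (rule cubic_real_root[OF c'])
      have "(real_of_int s * real (L - 1))^2 = (real (L - 1))^2" using s by auto
      then show "27 * (real_of_int s * real (L - 1))^2 \<le> 4 * (real (m - L))^3" using disc by simp
    qed
  qed simp
qed

lemma pos_sign_sg: "pos_sign = sg 1"
  by (rule ext) (simp add: pos_sign_def sg_def)

lemma digraph_G:
  assumes p1: "1 \<le> p" and pL: "p < L" and LN: "L < N"
  shows "digraph N (arcsG N L p)"
  using assms unfolding digraph_def arcsG_def by auto

lemma not_sym_G:
  assumes p1: "1 \<le> p" and pL: "p < L" and LN: "L < N"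
  shows "\<not> symmetric_digraph (arcsG N L p)"
proof -
  have "(0, 1) \<in> arcsG N L p" using assms by (simp add: arcsG_def)
  moreover have "(1, 0) \<notin> arcsG N L p" using assms by (simp add: arcsG_def)
  ultimately show ?thesis unfolding symmetric_digraph_def by blast
qed

lemma sc_G:
  assumes p1: "1 \<le> p" and pL: "p < L" and LN: "L < N"
  shows "strongly_connected N (arcsG N L p)"
proof -
  let ?G = "arcsG N L p"
  have to0: "(u, 0) \<in> ?G\<^sup>*" if u: "u < N" for u
  proof -
    have bk: "(Suc p, 0) \<in> ?G" using assms by (simp add: arcsG_def)
    consider "u = 0" | "p < u" | "u = 1" | "2 \<le> u \<and> u \<le> p" using p1 by linarith
    then show ?thesis
    proof cases
      case 2 then have "(u, 0) \<in> ?G" using u by (simp add: arcsG_def)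
      then show ?thesis by blast
    next
      case 3 then have "(u, Suc p) \<in> ?G" using assms by (simp add: arcsG_def)
      then show ?thesis using bk by (meson r_into_rtrancl rtrancl_into_rtrancl)
    next
      case 4 then have "(u, Suc p) \<in> ?G" using assms by (simp add: arcsG_def)
      then show ?thesis using bk by (meson r_into_rtrancl rtrancl_into_rtrancl)
    qed simp
  qed
  have from0: "(0, v) \<in> ?G\<^sup>*" if v: "v < N" for v
  proof -
    consider "v = 0" | "1 \<le> v \<and> v \<le> p" | "L < v" | "p < v \<and> v \<le> L" by linarith
    then show ?thesis
    proof cases
      case 2 then have "(0, v) \<in> ?G" using v by (simp add: arcsG_def)
      then show ?thesis by blast
    next
      case 3 then have "(0, v) \<in> ?G" using v by (simp add: arcsG_def)
      then show ?thesis by blast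
    next
      case 4 then have "(1, v) \<in> ?G" using assms by (simp add: arcsG_def)
      moreover have "(0, 1) \<in> ?G" using assms by (simp add: arcsG_def)
      ultimately show ?thesis by (meson r_into_rtrancl rtrancl_into_rtrancl)
    qed simp
  qed
  show ?thesis unfolding strongly_connected_def
    using to0 from0 by (meson atLeastLessThan_iff rtrancl_trans)
qed

lemma signing_sg: "s = 1 \<or> s = -1 \<Longrightarrow> signing A (sg s)"
  unfolding signing_def sg_def by auto

lemma unbalanced_G:
  assumes p1: "1 \<le> p" and pL: "p < L" and LN: "L < N"
  shows "\<not> cycle_balanced (arcsG N L p) (sg (-1))"
proof -
  have "dcycle (arcsG N L p) [0, 1, Suc p]"
  proof -
    have c3: "(i::nat) < 3 \<Longrightarrow> i = 0 \<or> i = 1 \<or> i = 2" for i by auto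
    have a0: "(0, 1) \<in> arcsG N L p" using assms by (simp add: arcsG_def)
    have a1: "(1, Suc p) \<in> arcsG N L p" using assms by (simp add: arcsG_def)
    have a2: "(Suc p, 0) \<in> arcsG N L p" using assms by (simp add: arcsG_def)
    have "\<forall>i<length [0, 1, Suc p]. ([0, 1, Suc p] ! i, [0, 1, Suc p] ! ((i + 1) mod length [0, 1, Suc p])) \<in> arcsG N L p"
    proof (intro allI impI)
      fix i assume "i < length [0, 1, Suc p]"
      then have "i = 0 \<or> i = 1 \<or> i = 2" using c3 by simp
      then show "([0, 1, Suc p] ! i, [0, 1, Suc p] ! ((i + 1) mod length [0, 1, Suc p])) \<in> arcsG N L p"
        using a0 a1 a2 by (elim disjE) simp_all
    qed
    moreover have "distinct [0, 1, Suc p]" using p1 by simp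
    ultimately show ?thesis unfolding dcycle_def by simp
  qed
  moreover have "cycle_sign (sg (-1)) [0, 1, Suc p] = -1"
  proof -
    have e: "{..<length [0, 1, Suc p]} = {0, 1, 2::nat}" by auto
    show ?thesis unfolding cycle_sign_def e by (simp add: sg_def)
  qed
  ultimately show ?thesis unfolding cycle_balanced_def by force
qed

definition outdeg :: "(nat \<times> nat) set \<Rightarrow> nat \<Rightarrow> nat" where
  "outdeg A v = card {w. (v, w) \<in> A}"

lemma iso_outdeg:
  assumes iso: "isomorphic N A B" and dA: "digraph N A" and dB: "digraph N B"
  and v: "v < N" and d: "outdeg A v = K"
  shows "\<exists>v'<N. outdeg B v' = K"
proof -
  obtain f where bij: "bij_betw f {0..<N} {0..<N}"
    and iff: "\<forall>u\<in>{0..<N}. \<forall>w\<in>{0..<N}. (u, w) \<in> A \<longleftrightarrow> (f u, f w) \<in> B"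
    using iso unfolding isomorphic_def by blast
  have fv: "f v < N" using bij v by (auto dest: bij_betwE)
  have "{w. (f v, w) \<in> B} = f ` {w. (v, w) \<in> A}"
  proof
    show "{w. (f v, w) \<in> B} \<subseteq> f ` {w. (v, w) \<in> A}"
    proof
      fix w' assume "w' \<in> {w. (f v, w) \<in> B}"
      then have b: "(f v, w') \<in> B" by simp
      then have "w' \<in> {0..<N}" using dB unfolding digraph_def by auto
      then obtain w where w: "w \<in> {0..<N}" "w' = f w" using bij by (metis bij_betw_imp_surj_on imageE)
      then have "(v, w) \<in> A" using iff v b by auto
      then show "w' \<in> f ` {w. (v, w) \<in> A}" using w by auto
    qed
  next
    show "f ` {w. (v, w) \<in> A} \<subseteq> {w. (f v, w) \<in> B}"
    proof
      fix w' assume "w' \<in> f ` {w. (v, w) \<in> A}"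
      then obtain w where w: "(v, w) \<in> A" "w' = f w" by auto
      then have "w \<in> {0..<N}" using dA unfolding digraph_def by auto
      then show "w' \<in> {w. (f v, w) \<in> B}" using iff v w by auto
    qed
  qed
  moreover have "inj_on f {w. (v, w) \<in> A}"
  proof -
    have "{w. (v, w) \<in> A} \<subseteq> {0..<N}" using dA unfolding digraph_def by auto
    then show ?thesis using bij bij_betw_imp_inj_on inj_on_subset by blast
  qed
  ultimately have "outdeg B (f v) = outdeg A v" unfolding outdeg_def by (simp add: card_image)
  then show ?thesis using fv d by auto
qed

lemma outdeg0_G:
  assumes p1: "1 \<le> p" and pL: "p < L" and LN: "L < N"
  shows "outdeg (arcsG N L p) 0 = p + (N - 1 - L)"
proof -
  have "{w. (0, w) \<in> arcsG N L p} = {1..p} \<union> {L<..<N}" by (auto simp: arcsG_def)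
  moreover have "{1..p} \<inter> {L<..<N} = {}" using pL by auto
  ultimately have "outdeg (arcsG N L p) 0 = card {1..p} + card {L<..<N}"
    unfolding outdeg_def by (simp add: card_Un_disjoint)
  then show ?thesis by simp
qed

lemma outdeg_other_G:
  assumes p1: "1 \<le> p" and pL: "p < L" and LN: "L < N" and v: "v \<noteq> 0"
  shows "outdeg (arcsG N L p) v \<le> Suc L"
proof -
  have "{w. (v, w) \<in> arcsG N L p} \<subseteq> {0..L}" using assms by (auto simp: arcsG_def)
  then have "outdeg (arcsG N L p) v \<le> card {0..L}" unfolding outdeg_def by (intro card_mono) auto
  then show ?thesis by simp
qed

lemma pow4: "n \<ge> 4 \<Longrightarrow> 16 * n \<le> (4::nat) ^ n"
proof (induction n rule: nat_induct_at_least)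
  case base then show ?case by simp
next
  case (Suc n) then show ?case by simp
qed

theorem theorem2p16:
  fixes n :: nat
  assumes "n \<ge> 4"
  shows "\<exists>D :: nat \<Rightarrow> (nat \<times> nat) set.
    (\<forall>i<n. digraph (4 ^ n) (D i) \<and> strongly_connected (4 ^ n) (D i)
            \<and> \<not> symmetric_digraph (D i)) \<and>
    (\<forall>i<n. \<forall>j<n. i \<noteq> j \<longrightarrow>
        \<not> isomorphic (4 ^ n) (D i) (D j) \<and>
        real_strongly_quasi_cospectral (4 ^ n) (D i) (D j))"
proof -
  define N where "N = (4::nat) ^ n"
  define L where "L = Suc n"
  define m where "m = N - 1"
  have big: "16 * n \<le> N" unfolding N_def by (rule pow4[OF assms])
  have NS: "N = Suc m" unfolding m_def using big assms by simp
  have LN: "L < N" unfolding L_def using big assms by simp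
  have LSm: "L < Suc m" using LN NS by simp
  have m2: "m \<ge> 2" using big assms unfolding m_def by simp
  have mL: "m - L \<ge> 7" "m - L \<ge> n" using big assms unfolding m_def L_def by simp_all
  have disc: "27 * (real (L - 1))^2 \<le> 4 * (real (m - L))^3"
  proof -
    define x where "x = real (m - L)"
    have x7: "x \<ge> 7" and xn: "x \<ge> real n" using mL unfolding x_def by simp_all
    have L1: "real (L - 1) = real n" unfolding L_def by simp
    have "27 * (real n)^2 \<le> 27 * x^2" using xn by (simp add: power_mono)
    also have "\<dots> \<le> 4 * x^3" using x7 by (simp add: power2_eq_square power3_eq_cube mult_right_mono)
    finally show ?thesis unfolding L1 x_def .
  qed
  define D where "D = (\<lambda>i. arcsG N L (Suc i))"
  have p: "1 \<le> Suc i" "Suc i < L" if "i < n" for i using that unfolding L_def by simp_all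
  have spec_eq: "spec (adj_mat N (D i) (sg s)) = spec (adj_mat N (D j) (sg s))" if "i < n" "j < n" for i j s
    unfolding D_def NS spec_G[OF p(1)[OF that(1)] p(2)[OF that(1)] LSm m2] spec_G[OF p(1)[OF that(2)] p(2)[OF that(2)] LSm m2] ..
  have realD: "real_spectrum (adj_mat N (D i) (sg s))" if "i < n" "s = 1 \<or> s = -1" for i s
    unfolding D_def NS by (rule real_G[OF p(1)[OF that(1)] p(2)[OF that(1)] LSm m2 that(2) disc])
  have part1: "\<forall>i<n. digraph N (D i) \<and> strongly_connected N (D i) \<and> \<not> symmetric_digraph (D i)"
    using digraph_G[OF _ _ LN] sc_G[OF _ _ LN] not_sym_G[OF _ _ LN] p unfolding D_def by blast
  have noniso: "\<not> isomorphic N (D i) (D j)" if ij: "i < n" "j < n" "i \<noteq> j" for i j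
  proof
    assume iso: "isomorphic N (D i) (D j)"
    have d0: "outdeg (D i) 0 = Suc i + (N - 1 - L)" unfolding D_def by (rule outdeg0_G[OF p(1)[OF ij(1)] p(2)[OF ij(1)] LN])
    have dA: "digraph N (D i)" and dB: "digraph N (D j)" using part1 ij by auto
    obtain v' where v': "v' < N" "outdeg (D j) v' = Suc i + (N - 1 - L)"
      using iso_outdeg[OF iso dA dB _ d0] LN by auto
    show False
    proof (cases "v' = 0")
      case True
      then have "outdeg (D j) v' = Suc j + (N - 1 - L)" unfolding D_def
        using outdeg0_G[OF p(1)[OF ij(2)] p(2)[OF ij(2)] LN] by simp
      then show False using v' ij by simp
    next
      case False
      then have "outdeg (D j) v' \<le> Suc L" unfolding D_def
        by (rule outdeg_other_G[OF p(1)[OF ij(2)] p(2)[OF ij(2)] LN])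
      moreover have "Suc L < Suc i + (N - 1 - L)" using big assms unfolding L_def by simp
      ultimately show False using v' by simp
    qed
  qed
  have rsq: "real_strongly_quasi_cospectral N (D i) (D j)" if ij: "i < n" "j < n" for i j
  proof -
    have unb: "\<not> cycle_balanced (D k) (sg (-1))" if "k < n" for k
      unfolding D_def by (rule unbalanced_G[OF p(1)[OF that] p(2)[OF that] LN])
    show ?thesis unfolding real_strongly_quasi_cospectral_def real_cospectral_def pos_sign_sg
      using spec_eq[OF ij] realD ij unb signing_sg[of "-1"] by blast
  qed
  show ?thesis unfolding N_def[symmetric]
    using part1 noniso rsq by blast
qed

end
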